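(* Let $\eta,\delta,M$ be integers greater than $1$ and let $f$ be a positive integer, with $\gcd(\eta,\delta)=1$, such that $$M=\frac{\delta^{2}(3f^{2}-1)}{3(\eta+\delta)^{2}+\delta^{2}},$$ and such that there is an integer $a\geq1$ for which $\sum_{i=0}^{M-1}(a+i)^{2}$ is a perfect square. Then: (i) if $\delta\equiv 1$ or $5\pmod 6$, then $M\equiv 0\pmod{\delta^{2}}$; if $\delta\equiv 0\pmod 6$, then $M\equiv 0\pmod{\delta^{2}/3}$; (ii) if moreover $f\equiv 1\pmod 2$, then $M\equiv 0\pmod{2\delta^{2}}$ when $\delta\equiv 1$ or $5\pmod 6$, and $M\equiv 0\pmod{2\delta^{2}/3}$ when $\delta\equiv 0\pmod 6$.
   Context: Here $f=a_2-a_1$ is the difference of the first terms of a pair $(a_1,a_2)$ of positive integers with $a_1+a_2=(\eta/\delta)M+1$. It is known from earlier work (cited) that a sum of $M>1$ consecutive squares $\sum_{i=0}^{M-1}(a+i)^2$ with $a\ge1$ can be a perfect square only if $M\equiv 0$ or $24\pmod{72}$, or $M\equiv 1,2$ or $16\pmod{24}$, or $M\equiv 9$ or $33\pmod{72}$, or $M\equiv 11\pmod{12}$. *)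

theory Defs
  imports Complex_Main
begin

end

theory Submission
  imports Defs
begin

lemma cop_add: "coprime (a::int) b \<Longrightarrow> coprime a (k * a + b)"
  by (simp add: coprime_iff_gcd_eq_1 gcd_add_mult)

lemma cop3: assumes "(d::int) mod 3 \<noteq> 0" shows "coprime 3 d"
proof -
  have "d = (d div 3) * 3 + d mod 3" by simp
  moreover have "coprime 3 (d mod 3)"
  proof -
    have "d mod 3 = 1 \<or> d mod 3 = 2" using assms by presburger
    moreover have "coprime (3::int) 1" by simp
    moreover have "coprime (3::int) 2" using coprime_add_one_left[of "2::int"] by simp
    ultimately show ?thesis by metis
  qed
  ultimately show ?thesis by (metis cop_add)
qed

theorem corollary2:
  fixes eta delta M f :: int
  assumes "eta > 1" and "delta > 1" and "M > 1" and "f > 0"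
    and "gcd eta delta = 1"
    and "(of_int M :: rat) =
           of_int (delta^2 * (3 * f^2 - 1)) / of_int (3 * (eta + delta)^2 + delta^2)"
    and "\<exists>a::int. a \<ge> 1 \<and> (\<exists>k::int. (\<Sum>i\<in>{0..M-1}. (a + i)^2) = k^2)"
  shows "((delta mod 6 = 1 \<or> delta mod 6 = 5) \<longrightarrow> delta^2 dvd M)
       \<and> (delta mod 6 = 0 \<longrightarrow> (delta^2 div 3) dvd M)
       \<and> (odd f \<longrightarrow>
            ((delta mod 6 = 1 \<or> delta mod 6 = 5) \<longrightarrow> 2 * delta^2 dvd M)
          \<and> (delta mod 6 = 0 \<longrightarrow> (2 * delta^2 div 3) dvd M))"
proof -
  define D where "D = 3 * (eta + delta)^2 + delta^2"
  have Dpos: "D > 0" unfolding D_def using assms(2) by (intro add_nonneg_pos) auto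
  have "(of_int (M * D) :: rat) = of_int (delta^2 * (3 * f^2 - 1))"
    using assms(6) Dpos unfolding D_def[symmetric] by (simp add: field_simps)
  hence eq: "M * D = delta^2 * (3 * f^2 - 1)" by (simp only: of_int_eq_iff)
  have ced: "coprime eta delta" using assms(5) by (simp add: coprime_iff_gcd_eq_1)
  have odd4: "odd f \<Longrightarrow> \<not> 4 dvd (3 * f^2 - 1)"
  proof
    assume "odd f" "4 dvd (3 * f^2 - 1)"
    then obtain n where "f = 2*n+1" by (metis oddE)
    hence "3 * f^2 - 1 = 4 * (3*n^2+3*n) + 2" by (simp add: power2_eq_square algebra_simps)
    with \<open>4 dvd _\<close> show False by presburger
  qed
  have A: "(delta mod 6 = 1 \<or> delta mod 6 = 5) \<longrightarrow> delta^2 dvd M \<and> (odd f \<longrightarrow> 2 * delta^2 dvd M)"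
  proof
    assume h: "delta mod 6 = 1 \<or> delta mod 6 = 5"
    have "coprime 3 delta" using h by (intro cop3) presburger
    hence c1: "coprime delta (3 * eta^2)" using ced by (simp add: coprime_commute)
    have "D = (6*eta + 4*delta) * delta + 3 * eta^2" unfolding D_def
      by (simp add: power2_eq_square algebra_simps)
    hence "coprime delta D" using cop_add[OF c1] by simp
    hence "coprime (delta^2) D" by simp
    moreover have "delta^2 dvd M * D" using eq by simp
    ultimately have dM: "delta^2 dvd M" using coprime_dvd_mult_left_iff by blast
    then obtain t where t: "M = delta^2 * t" by blast
    have "delta^2 * (t * D) = delta^2 * (3 * f^2 - 1)" using eq t by (simp add: algebra_simps)
    hence tD: "t * D = 3 * f^2 - 1" using assms(2) by (subst (asm) mult_left_cancel) auto
    show "delta^2 dvd M \<and> (odd f \<longrightarrow> 2 * delta^2 dvd M)"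
    proof (intro conjI impI dM)
      assume of: "odd f"
      have dodd: "odd delta" using h by presburger
      have "odd D"
      proof (cases "even eta")
        case True
        then obtain k where k: "eta = 2*k" by blast
        obtain m where m: "delta = 2*m+1" using dodd by (metis oddE)
        have "D = 4 * (3*k^2 + 6*k*m + 3*k + 4*m^2+4*m+1)" unfolding D_def k m
          by (simp add: power2_eq_square algebra_simps)
        hence "4 dvd 3 * f^2 - 1" using tD by (metis dvd_mult dvd_triv_left)
        with odd4 of show ?thesis by blast
      next
        case False
        then obtain k where k: "eta = 2*k+1" by (metis oddE)
        obtain m where m: "delta = 2*m+1" using dodd by (metis oddE)
        have "D = 2 * (6*(k+m+1)^2 + 2*m^2+2*m) + 1" unfolding D_def k m
          by (simp add: power2_eq_square algebra_simps)
        thus ?thesis by simp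
      qed
      moreover have "even (t * D)" using tD of by simp
      ultimately have "even t" by simp
      then obtain s where "t = 2 * s" by blast
      thus "2 * delta^2 dvd M" using t by simp
    qed
  qed
  have B: "delta mod 6 = 0 \<longrightarrow> (delta^2 div 3) dvd M \<and> (odd f \<longrightarrow> (2 * delta^2 div 3) dvd M)"
  proof
    assume h: "delta mod 6 = 0"
    hence "6 dvd delta" by presburger
    then obtain m where m: "delta = 6 * m" by blast
    have e1: "delta^2 div 3 = 12 * m^2" unfolding m by (simp add: power2_eq_square)
    have e2: "2 * delta^2 div 3 = 24 * m^2" unfolding m by (simp add: power2_eq_square)
    define E where "E = eta^2 + 12*m*eta + 48*m^2"
    have DE: "D = 3 * E" unfolding D_def E_def m by (simp add: power2_eq_square algebra_simps)
    have eq2: "M * E = 12 * m^2 * (3 * f^2 - 1)" using eq DE m by (simp add: power2_eq_square algebra_simps)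
    have cm: "coprime m eta" using ced m by (simp add: coprime_commute)
    have "(3::int) dvd delta" using m by simp
    hence c3e: "coprime 3 eta" using coprime_divisors[OF _ dvd_refl ced[THEN coprime_commute[THEN iffD1]]] by blast
    have "(2::int) dvd delta" using m by simp
    hence c2e: "coprime 2 eta" using coprime_divisors[OF _ dvd_refl ced[THEN coprime_commute[THEN iffD1]]] by blast
    have "coprime m E"
    proof -
      have "E = (12*eta + 48*m) * m + eta^2" unfolding E_def by (simp add: power2_eq_square algebra_simps)
      thus ?thesis using cop_add[of m "eta^2" "12*eta + 48*m"] cm by simp
    qed
    moreover have "coprime 3 E"
    proof -
      have "E = (4*m*eta + 16*m^2) * 3 + eta^2" unfolding E_def by (simp add: power2_eq_square algebra_simps)
      thus ?thesis using cop_add[of 3 "eta^2" "4*m*eta + 16*m^2"] c3e by simp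
    qed
    moreover have c2E: "coprime 2 E"
    proof -
      have "E = (6*m*eta + 24*m^2) * 2 + eta^2" unfolding E_def by (simp add: power2_eq_square algebra_simps)
      thus ?thesis using cop_add[of 2 "eta^2" "6*m*eta + 24*m^2"] c2e by simp
    qed
    ultimately have "coprime (2*2*3*m^2) E"
      by (simp only: coprime_mult_left_iff coprime_power_left_iff) (simp add: c2E)
    hence cE: "coprime (12*m^2) E" by simp
    have "12*m^2 dvd M * E" using eq2 by simp
    hence dM: "12*m^2 dvd M" using cE coprime_dvd_mult_left_iff by blast
    then obtain t where t: "M = 12*m^2 * t" by blast
    have m0: "m \<noteq> 0" using m assms(2) by auto
    have "(12*m^2) * (t * E) = (12*m^2) * (3 * f^2 - 1)" using eq2 t by (simp add: algebra_simps)
    hence tE: "t * E = 3 * f^2 - 1" using m0 by (subst (asm) mult_left_cancel) auto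
    show "(delta^2 div 3) dvd M \<and> (odd f \<longrightarrow> (2 * delta^2 div 3) dvd M)"
    proof (intro conjI impI)
      show "(delta^2 div 3) dvd M" using e1 dM by simp
      assume of: "odd f"
      have "odd E" using c2E by (simp add: coprime_commute)
      moreover have "even (t * E)" using tE of by simp
      ultimately have "even t" by simp
      then obtain s where "t = 2 * s" by blast
      thus "(2 * delta^2 div 3) dvd M" using t e2 by simp
    qed
  qed
  show ?thesis using A B by (intro conjI impI; metis)
qed

end
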